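(* Let $p/q$ be an even rational parameter and $P=2p/(p+q)$. For every tile center $c=(x,y)$, the label assigned to $(x,-y)$ by the tile description is obtained from the label assigned to $(x,y)$ by swapping N with S (and leaving E and W unchanged). Equivalently, the tiling produced by $(\Xi_P,X_P)$ is invariant under reflection in the $x$-axis.
   Context: An even rational parameter is a rational $p/q\in(0,1)$, $p,q$ positive coprime integers, $pq$ even; $\omega=p+q$, $P=2p/\omega$. Tile centers are the points $(m+\frac12,n+\frac12)$, $m,n\in\mathbb Z$; each is the center of a unit square with edges N, S, E, W. Let $\Lambda_P\subset\mathbb R^3$ be the lattice generated by $(2,P,P),(0,2,0),(0,0,2)$, $X_P=\mathbb R^3/\Lambda_P$ with coordinates $(T,U_1,U_2)$ and fundamental domain $[-1,1]^3$, and $\Xi_P(x,y)=(2Px+2y,2Px,2Px+2Py)\bmod\Lambda_P$. Each fiber $\{T\}\times[-1,1]^2$ is partitioned: given $u_1\le u_2\le u_3$, the lines $U_1=u_i$, $U_2=u_i$ cut $[-1,1]^2$ into a $4\times4$ grid of rectangles indexed by (column $a$, row $b$), columns in increasing $U_1$, rows in increasing $U_2$. Special rectangles with single letters: for $T\in[-1,-1+P]$: $(u_1,u_2,u_3)=(T,1-P,2-P+T)$, W $(4,4)$, N $(1,3)$, E $(2,2)$, S $(3,1)$; for $T\in[-1+P,1-P]$: $(-1+P,T,1-P)$, N $(1,4)$, E $(3,3)$, W $(2,2)$, S $(4,1)$; for $T\in[1-P,1]$: $(-2+P+T,-1+P,T)$, N $(2,4)$, W $(3,3)$, S $(4,2)$,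 E $(1,1)$. A non-special rectangle gets the unordered pair of letters of the special rectangles in its column and in its row; special rectangles get the empty label. The label of a tile center $c$ is the label of the rectangle whose interior contains the representative of $\Xi_P(c)$ in $[-1,1]^3$ (known to be well defined for even rational parameters); a label $\{X,Y\}$ is drawn as a segment joining the midpoints of edges $X$ and $Y$ of the unit square centered at $c$. *)

theory Defs
  imports Complex_Main
begin

datatype dir = N | S | E | W

definition even_rational_param :: "nat \<Rightarrow> nat \<Rightarrow> bool" where
  "even_rational_param p q \<longleftrightarrow> 0 < p \<and> 0 < q \<and> p < q \<and> coprime p q \<and> even (p * q)"

definition Pof :: "nat \<Rightarrow> nat \<Rightarrow> real" where
  "Pof p q = 2 * real p / real (p + q)"

definition tile_center :: "int \<Rightarrow> int \<Rightarrow> real \<times> real" where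
  "tile_center m n = (real_of_int m + 1/2, real_of_int n + 1/2)"

definition Lambda :: "real \<Rightarrow> (real \<times> real \<times> real) set" where
  "Lambda PP = {(2 * of_int i, of_int i * PP + 2 * of_int j, of_int i * PP + 2 * of_int k)
                 | i j k :: int. True}"

text \<open>The map Xi_P (before reduction modulo the lattice).\<close>
definition Xi :: "real \<Rightarrow> real \<times> real \<Rightarrow> real \<times> real \<times> real" where
  "Xi PP c = (2 * PP * fst c + 2 * snd c, 2 * PP * fst c, 2 * PP * fst c + 2 * PP * snd c)"

definition regime_ok :: "real \<Rightarrow> nat \<Rightarrow> real \<Rightarrow> bool" where
  "regime_ok PP r T \<longleftrightarrow>
     (r = 1 \<and> -1 \<le> T \<and> T \<le> -1 + PP) \<or>
     (r = 2 \<and> -1 + PP \<le> T \<and> T \<le> 1 - PP) \<or>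
     (r = 3 \<and> 1 - PP \<le> T \<and> T \<le> 1)"

definition cuts :: "real \<Rightarrow> nat \<Rightarrow> real \<Rightarrow> real \<times> real \<times> real" where
  "cuts PP r T =
     (if r = 1 then (T, 1 - PP, 2 - PP + T)
      else if r = 2 then (-1 + PP, T, 1 - PP)
      else (-2 + PP + T, -1 + PP, T))"

definition cutv :: "real \<times> real \<times> real \<Rightarrow> nat \<Rightarrow> real" where
  "cutv u i = (case u of (u1, u2, u3) \<Rightarrow>
      (if i = 0 then -1 else if i = 1 then u1 else if i = 2 then u2 else if i = 3 then u3 else 1))"

definition in_rect_interior :: "real \<times> real \<times> real \<Rightarrow> nat \<Rightarrow> nat \<Rightarrow> real \<Rightarrow> real \<Rightarrow> bool" where
  "in_rect_interior u a b U1 U2 \<longleftrightarrow>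
     a \<in> {1..4} \<and> b \<in> {1..4} \<and>
     cutv u (a - 1) < U1 \<and> U1 < cutv u a \<and> cutv u (b - 1) < U2 \<and> U2 < cutv u b"

text \<open>Special rectangles (column, row, letter) in each regime.\<close>
definition special :: "nat \<Rightarrow> (nat \<times> nat \<times> dir) set" where
  "special r =
     (if r = 1 then {(4,4,W), (1,3,N), (2,2,E), (3,1,S)}
      else if r = 2 then {(1,4,N), (3,3,E), (2,2,W), (4,1,S)}
      else {(2,4,N), (3,3,W), (4,2,S), (1,1,E)})"

definition rect_label :: "nat \<Rightarrow> nat \<Rightarrow> nat \<Rightarrow> dir set" where
  "rect_label r a b =
     (if \<exists>d. (a, b, d) \<in> special r then {}
      else {d. \<exists>b'. (a, b', d) \<in> special r} \<union> {d. \<exists>a'. (a', b, d) \<in> special r})"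

definition has_label :: "nat \<Rightarrow> nat \<Rightarrow> real \<times> real \<Rightarrow> dir set \<Rightarrow> bool" where
  "has_label p q c L \<longleftrightarrow>
     (\<exists>T U1 U2 v1 v2 v3 r a b.
        (v1, v2, v3) \<in> Lambda (Pof p q) \<and>
        (T - v1, U1 - v2, U2 - v3) = Xi (Pof p q) c \<and>
        T \<in> {-1..1} \<and> U1 \<in> {-1..1} \<and> U2 \<in> {-1..1} \<and>
        regime_ok (Pof p q) r T \<and>
        in_rect_interior (cuts (Pof p q) r T) a b U1 U2 \<and>
        L = rect_label r a b)"

definition tile_label :: "nat \<Rightarrow> nat \<Rightarrow> real \<times> real \<Rightarrow> dir set" where
  "tile_label p q c = (THE L. has_label p q c L)"

definition swapNS :: "dir \<Rightarrow> dir" where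
  "swapNS d = (case d of N \<Rightarrow> S | S \<Rightarrow> N | E \<Rightarrow> E | W \<Rightarrow> W)"

end

theory Submission
  imports Defs
begin

lemma Lambda_iff: "(v1,v2,v3) \<in> Lambda P \<longleftrightarrow> (\<exists>i j k::int. v1 = 2*of_int i \<and> v2 = of_int i*P + 2*of_int j \<and> v3 = of_int i*P+2*of_int k)"
  unfolding Lambda_def by auto

definition wit :: "real \<Rightarrow> real \<times> real \<times> real \<Rightarrow> real \<Rightarrow> real \<Rightarrow> real \<Rightarrow> nat \<Rightarrow> nat \<Rightarrow> nat \<Rightarrow> bool" where
  "wit P X T U1 U2 r a b \<longleftrightarrow> (\<exists>v1 v2 v3. (v1,v2,v3) \<in> Lambda P \<and> (T - v1, U1 - v2, U2 - v3) = X)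
     \<and> T \<in> {-1..1} \<and> U1 \<in> {-1..1} \<and> U2 \<in> {-1..1} \<and> regime_ok P r T \<and> in_rect_interior (cuts P r T) a b U1 U2"

lemma has_label_wit: "has_label p q c L \<longleftrightarrow> (\<exists>T U1 U2 r a b. wit (Pof p q) (Xi (Pof p q) c) T U1 U2 r a b \<and> L = rect_label r a b)"
  unfolding has_label_def wit_def by blast

definition ordered :: "real \<times> real \<times> real \<Rightarrow> bool" where
  "ordered u \<longleftrightarrow> -1 \<le> cutv u 1 \<and> cutv u 1 \<le> cutv u 2 \<and> cutv u 2 \<le> cutv u 3 \<and> cutv u 3 \<le> 1"

lemma cuts_ordered: "0 < P \<Longrightarrow> P < 1 \<Longrightarrow> regime_ok P r T \<Longrightarrow> ordered (cuts P r T)"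
  unfolding ordered_def regime_ok_def cuts_def cutv_def by auto

lemma a4: "a \<in> {1..4::nat} \<Longrightarrow> a = 1 \<or> a = 2 \<or> a = 3 \<or> a = 4" by auto

lemma col_bounds:
  assumes "ordered u" "a \<in> {1..4}" "cutv u (a-1) < z" "z < cutv u a"
  shows "-1 < z \<and> z < 1"
proof -
  obtain u1 u2 u3 where u: "u = (u1,u2,u3)" by (cases u)
  show ?thesis using a4[OF assms(2)] assms u by (auto simp: ordered_def cutv_def)
qed

lemma col_unique:
  assumes "ordered u" "a \<in> {1..4}" "cutv u (a-1) < z" "z < cutv u a"
    "a' \<in> {1..4}" "cutv u (a'-1) < z" "z < cutv u a'"
  shows "a = a'"
proof -
  obtain u1 u2 u3 where u: "u = (u1,u2,u3)" by (cases u)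
  show ?thesis using a4[OF assms(2)] a4[OF assms(5)] assms u by (auto simp: ordered_def cutv_def)
qed

lemma col_exists:
  assumes "ordered u" "-1 < z" "z < 1" "z \<noteq> cutv u 1" "z \<noteq> cutv u 2" "z \<noteq> cutv u 3"
  shows "\<exists>a\<in>{1..4}. cutv u (a-1) < z \<and> z < cutv u a"
proof -
  obtain u1 u2 u3 where u: "u = (u1,u2,u3)" by (cases u)
  have c: "cutv u 0 = -1" "cutv u 1 = u1" "cutv u 2 = u2" "cutv u 3 = u3" "cutv u 4 = 1"
    by (simp_all add: u cutv_def)
  have "z < u1 \<or> (u1 < z \<and> z < u2) \<or> (u2 < z \<and> z < u3) \<or> u3 < z"
    using assms c by (auto simp: ordered_def)
  then show ?thesis
  proof (elim disjE)
    assume "z < u1" then show ?thesis using assms c by (intro bexI[of _ 1]) auto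
  next
    assume "u1 < z \<and> z < u2" then show ?thesis using assms c by (intro bexI[of _ 2]) auto
  next
    assume "u2 < z \<and> z < u3" then show ?thesis using assms c by (intro bexI[of _ 3]) auto
  next
    assume "u3 < z" then show ?thesis using assms c by (intro bexI[of _ 4]) auto
  qed
qed

lemma rect_bounds:
  assumes "ordered u" "in_rect_interior u a b U1 U2"
  shows "-1 < U1 \<and> U1 < 1 \<and> -1 < U2 \<and> U2 < 1"
  using assms col_bounds[of u a U1] col_bounds[of u b U2] by (auto simp: in_rect_interior_def)

lemma transfer_generic:
  assumes "\<And>a z. a \<in> {1..4} \<Longrightarrow> cutv u (a-1) < z \<Longrightarrow> z < cutv u a \<Longrightarrow>
      g a \<in> {1..4} \<and> cutv u' (g a - 1) < f z \<and> f z < cutv u' (g a) \<and> a \<in> A"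
    and "\<And>a b. a \<in> A \<Longrightarrow> b \<in> A \<Longrightarrow> rect_label r' (g a) (g b) = rect_label r a b"
    and "in_rect_interior u a b U1 U2"
  shows "in_rect_interior u' (g a) (g b) (f U1) (f U2) \<and> rect_label r' (g a) (g b) = rect_label r a b"
proof -
  have 1: "g a \<in> {1..4} \<and> cutv u' (g a - 1) < f U1 \<and> f U1 < cutv u' (g a) \<and> a \<in> A"
    using assms(1)[of a U1] assms(3) by (auto simp: in_rect_interior_def)
  have 2: "g b \<in> {1..4} \<and> cutv u' (g b - 1) < f U2 \<and> f U2 < cutv u' (g b) \<and> b \<in> A"
    using assms(1)[of b U2] assms(3) by (auto simp: in_rect_interior_def)
  show ?thesis using 1 2 assms(2)[of a b] by (auto simp: in_rect_interior_def)
qed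

lemma swap_inv[simp]: "swapNS (swapNS d) = d" by (cases d) (auto simp: swapNS_def)
lemma spec_swap: "(b,a,d) \<in> special r \<longleftrightarrow> (a,b,swapNS d) \<in> special r"
  by (cases d) (auto simp: special_def swapNS_def)
lemma mem_swap_img: "d \<in> swapNS ` A \<longleftrightarrow> swapNS d \<in> A"
  by (metis image_iff swap_inv)
lemma rect_label_swap: "rect_label r b a = swapNS ` rect_label r a b"
proof -
  have e: "(\<exists>d. (b,a,d) \<in> special r) \<longleftrightarrow> (\<exists>d. (a,b,d) \<in> special r)"
    by (metis spec_swap swap_inv)
  show ?thesis
  proof (cases "\<exists>d. (a,b,d) \<in> special r")
    case True then show ?thesis using e by (simp add: rect_label_def)
  next
    case False
    show ?thesis
    proof (rule set_eqI)
      fix d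
      show "d \<in> rect_label r b a \<longleftrightarrow> d \<in> swapNS ` rect_label r a b"
        unfolding mem_swap_img using False e by (simp add: rect_label_def spec_swap[of b _ d] spec_swap[of _ a d]) blast
    qed
  qed
qed

lemma t1: "a \<in> {1,3,4::nat} \<Longrightarrow> b \<in> {1,3,4::nat} \<Longrightarrow>
  rect_label 1 (if a = 1 then 1 else if a = 3 then 2 else 3) (if b = 1 then 1 else if b = 3 then 2 else 3) = rect_label 2 a b"
  by (auto simp: rect_label_def special_def)

lemma t2: "a \<in> {2,3,4::nat} \<Longrightarrow> b \<in> {2,3,4::nat} \<Longrightarrow>
  rect_label 2 (if a = 2 then 1 else if a = 3 then 2 else 4) (if b = 2 then 1 else if b = 3 then 2 else 4) = rect_label 3 a b"
  by (auto simp: rect_label_def special_def)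

lemma t3: "a \<in> {1,3::nat} \<Longrightarrow> b \<in> {1,3::nat} \<Longrightarrow>
  rect_label 1 (if a = 1 then 4 else 2) (if b = 1 then 4 else 2) = rect_label 3 a b"
  by (auto simp: rect_label_def special_def)

definition g1 :: "nat \<Rightarrow> nat" where "g1 a = (if a = 1 then 1 else if a = 3 then 2 else 3)"
definition g2 :: "nat \<Rightarrow> nat" where "g2 a = (if a = 2 then 1 else if a = 3 then 2 else 4)"
definition g3 :: "nat \<Rightarrow> nat" where "g3 a = (if a = 1 then 4 else 2)"

lemma tr1_col: "0 < P \<Longrightarrow> P < 1 \<Longrightarrow> a \<in> {1..4} \<Longrightarrow> cutv (cuts P 2 (-1+P)) (a-1) < z \<Longrightarrow> z < cutv (cuts P 2 (-1+P)) a \<Longrightarrow>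
   g1 a \<in> {1..4} \<and> cutv (cuts P 1 (-1+P)) (g1 a - 1) < id z \<and> id z < cutv (cuts P 1 (-1+P)) (g1 a) \<and> a \<in> {1,3,4}"
  using a4[of a] by (auto simp: g1_def cuts_def cutv_def)

lemma tr2_col: "0 < P \<Longrightarrow> P < 1 \<Longrightarrow> a \<in> {1..4} \<Longrightarrow> cutv (cuts P 3 (1-P)) (a-1) < z \<Longrightarrow> z < cutv (cuts P 3 (1-P)) a \<Longrightarrow>
   g2 a \<in> {1..4} \<and> cutv (cuts P 2 (1-P)) (g2 a - 1) < id z \<and> id z < cutv (cuts P 2 (1-P)) (g2 a) \<and> a \<in> {2,3,4}"
  using a4[of a] by (auto simp: g2_def cuts_def cutv_def)

definition f3 :: "real \<Rightarrow> real \<Rightarrow> real" where "f3 P z = (if z < -1+P then z - P + 2 else z - P)"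

lemma tr3_col: "0 < P \<Longrightarrow> P < 1 \<Longrightarrow> a \<in> {1..4} \<Longrightarrow> cutv (cuts P 3 1) (a-1) < z \<Longrightarrow> z < cutv (cuts P 3 1) a \<Longrightarrow>
   g3 a \<in> {1..4} \<and> cutv (cuts P 1 (-1)) (g3 a - 1) < f3 P z \<and> f3 P z < cutv (cuts P 1 (-1)) (g3 a) \<and> a \<in> {1,3}"
  using a4[of a] by (auto simp: g3_def f3_def cuts_def cutv_def)

lemma t1': "a \<in> {1,3,4} \<Longrightarrow> b \<in> {1,3,4} \<Longrightarrow> rect_label 1 (g1 a) (g1 b) = rect_label 2 a b"
  using t1 by (simp add: g1_def)
lemma t2': "a \<in> {2,3,4} \<Longrightarrow> b \<in> {2,3,4} \<Longrightarrow> rect_label 2 (g2 a) (g2 b) = rect_label 3 a b"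
  using t2 by (simp add: g2_def)
lemma t3': "a \<in> {1,3} \<Longrightarrow> b \<in> {1,3} \<Longrightarrow> rect_label 1 (g3 a) (g3 b) = rect_label 3 a b"
  using t3 by (simp add: g3_def)

definition canon :: "real \<Rightarrow> real \<Rightarrow> nat" where
  "canon P T = (if T \<le> -1+P then 1 else if T \<le> 1-P then 2 else 3)"

lemma regime_canon: "0 < P \<Longrightarrow> P < 1 \<Longrightarrow> -1 \<le> T \<Longrightarrow> T \<le> 1 \<Longrightarrow> regime_ok P (canon P T) T"
  by (auto simp: canon_def regime_ok_def)

lemma normalize:
  assumes P: "0 < P" "P < 1" and w: "wit P X T U1 U2 r a b"
  shows "\<exists>T' U1' U2' a' b'. wit P X T' U1' U2' (canon P T') a' b' \<and> T' < 1 \<and> rect_label (canon P T') a' b' = rect_label r a b"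
proof -
  obtain i j k where X: "X = (T - 2*of_int i, U1 - (of_int i*P + 2*of_int j), U2 - (of_int i*P+2*of_int k))"
    using w unfolding wit_def Lambda_iff by auto
  have T: "-1 \<le> T" "T \<le> 1" and reg: "regime_ok P r T" and rect: "in_rect_interior (cuts P r T) a b U1 U2"
    using w by (auto simp: wit_def)
  have U: "-1 < U1 \<and> U1 < 1 \<and> -1 < U2 \<and> U2 < 1"
    using rect_bounds[OF cuts_ordered[OF P reg] rect] .
  show ?thesis
  proof (cases "T = 1")
    case True
    then have r3: "r = 3" using reg P by (auto simp: regime_ok_def)
    have tr: "in_rect_interior (cuts P 1 (-1)) (g3 a) (g3 b) (f3 P U1) (f3 P U2) \<and> rect_label 1 (g3 a) (g3 b) = rect_label 3 a b"
      by (rule transfer_generic[where A="{1,3}"]) (use tr3_col[OF P] t3' rect r3 True in auto)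
    define e1 :: int where "e1 = (if U1 < -1+P then 1 else 0)"
    define e2 :: int where "e2 = (if U2 < -1+P then 1 else 0)"
    have c1: "canon P (-1) = 1" using P by (simp add: canon_def)
    have "wit P X (-1) (f3 P U1) (f3 P U2) 1 (g3 a) (g3 b)"
      unfolding wit_def
    proof (intro conjI)
      have mem: "(2 * of_int (i-1), of_int (i-1)*P + 2*of_int (j+e1), of_int (i-1)*P + 2*of_int (k+e2)) \<in> Lambda P"
        unfolding Lambda_iff by blast
      have "(- 1 - 2 * of_int (i-1), f3 P U1 - (of_int (i-1)*P + 2*of_int (j+e1)), f3 P U2 - (of_int (i-1)*P + 2*of_int (k+e2))) = X"
      proof -
        have 1: "- 1 - 2 * of_int (i-1) = T - 2 * (of_int i::real)" using True by simp
        have 2: "f3 P U1 - (of_int (i-1)*P + 2*of_int (j+e1)) = U1 - (of_int i*P + 2*of_int j)"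
          unfolding f3_def e1_def by (simp add: algebra_simps)
        have 3: "f3 P U2 - (of_int (i-1)*P + 2*of_int (k+e2)) = U2 - (of_int i*P + 2*of_int k)"
          unfolding f3_def e2_def by (simp add: algebra_simps)
        show ?thesis unfolding X using 1 2 3 by simp
      qed
      then show "\<exists>v1 v2 v3. (v1, v2, v3) \<in> Lambda P \<and> (- 1 - v1, f3 P U1 - v2, f3 P U2 - v3) = X"
        using mem by blast
    next
      show "-1 \<in> {-1..1::real}" by simp
    next
      show "f3 P U1 \<in> {-1..1}" using U P unfolding f3_def by auto
    next
      show "f3 P U2 \<in> {-1..1}" using U P unfolding f3_def by auto
    next
      show "regime_ok P 1 (-1)" using P unfolding regime_ok_def by simp
    next
      show "in_rect_interior (cuts P 1 (- 1)) (g3 a) (g3 b) (f3 P U1) (f3 P U2)" using tr by (rule conjunct1)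
    qed
    then show ?thesis using tr r3 c1 by (intro exI[of _ "-1"] exI[of _ "f3 P U1"] exI[of _ "f3 P U2"] exI[of _ "g3 a"] exI[of _ "g3 b"]) simp
  next
    case False
    then have T1: "T < 1" using T by simp
    have "r = canon P T \<or> (r = 2 \<and> T = -1+P) \<or> (r = 3 \<and> T = 1-P)"
      using reg P T1 unfolding canon_def regime_ok_def by (auto split: if_splits)
    then consider "r = canon P T" | "r = 2" "T = -1+P" | "r = 3" "T = 1-P" by blast
    then show ?thesis
    proof cases
      case 1 then show ?thesis using w T1 by blast
    next
      case 2
      have rect': "in_rect_interior (cuts P 2 (-1+P)) a b U1 U2" using rect 2 by simp
      have tr: "in_rect_interior (cuts P 1 (-1+P)) (g1 a) (g1 b) (id U1) (id U2) \<and> rect_label 1 (g1 a) (g1 b) = rect_label 2 a b"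
        by (rule transfer_generic[OF tr1_col[OF P] t1' rect'])
      have c: "canon P T = 1" using 2 by (simp add: canon_def)
      have lat: "\<exists>v1 v2 v3. (v1,v2,v3) \<in> Lambda P \<and> (T - v1, U1 - v2, U2 - v3) = X"
        and bnd: "T \<in> {-1..1}" "U1 \<in> {-1..1}" "U2 \<in> {-1..1}" using w unfolding wit_def by blast+
      have rg: "regime_ok P 1 T" using 2 P by (simp add: regime_ok_def)
      have ir: "in_rect_interior (cuts P 1 T) (g1 a) (g1 b) U1 U2" using tr 2 by simp
      have "wit P X T U1 U2 1 (g1 a) (g1 b)" unfolding wit_def using lat bnd rg ir by blast
      then show ?thesis using tr c 2 T1 by (intro exI[of _ T] exI[of _ U1] exI[of _ U2] exI[of _ "g1 a"] exI[of _ "g1 b"]) simp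
    next
      case 3
      have rect': "in_rect_interior (cuts P 3 (1-P)) a b U1 U2" using rect 3 by simp
      have tr: "in_rect_interior (cuts P 2 (1-P)) (g2 a) (g2 b) (id U1) (id U2) \<and> rect_label 2 (g2 a) (g2 b) = rect_label 3 a b"
        by (rule transfer_generic[OF tr2_col[OF P] t2' rect'])
      have c: "canon P T = 2" using 3 P by (simp add: canon_def)
      have lat: "\<exists>v1 v2 v3. (v1,v2,v3) \<in> Lambda P \<and> (T - v1, U1 - v2, U2 - v3) = X"
        and bnd: "T \<in> {-1..1}" "U1 \<in> {-1..1}" "U2 \<in> {-1..1}" using w unfolding wit_def by blast+
      have rg: "regime_ok P 2 T" using 3 P by (simp add: regime_ok_def)
      have ir: "in_rect_interior (cuts P 2 T) (g2 a) (g2 b) U1 U2" using tr 3 by simp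
      have "wit P X T U1 U2 2 (g2 a) (g2 b)" unfolding wit_def using lat bnd rg ir by blast
      then show ?thesis using tr c 3 T1 by (intro exI[of _ T] exI[of _ U1] exI[of _ U2] exI[of _ "g2 a"] exI[of _ "g2 b"]) simp
    qed
  qed
qed

lemma int_zero: "(-2::real) < 2 * of_int z \<Longrightarrow> 2 * of_int z < (2::real) \<Longrightarrow> z = 0"
proof -
  assume "(-2::real) < 2 * of_int z" "2 * of_int z < (2::real)"
  then have "of_int (-1) < (of_int z::real)" "(of_int z::real) < of_int 1" by auto
  then have "-1 < z" "z < 1" by (simp_all only: of_int_less_iff)
  then show "z = 0" by simp
qed

lemma canon_unique:
  assumes P: "0 < P" "P < 1"
    and w: "wit P X T U1 U2 (canon P T) a b" and w': "wit P X T' U1' U2' (canon P T') a' b'"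
    and "T < 1" "T' < 1"
  shows "rect_label (canon P T) a b = rect_label (canon P T') a' b'"
proof -
  obtain i j k where X: "X = (T - 2*of_int i, U1 - (of_int i*P + 2*of_int j), U2 - (of_int i*P+2*of_int k))"
    using w unfolding wit_def Lambda_iff by auto
  obtain i' j' k' where X': "X = (T' - 2*of_int i', U1' - (of_int i'*P + 2*of_int j'), U2' - (of_int i'*P+2*of_int k'))"
    using w' unfolding wit_def Lambda_iff by auto
  have T: "-1 \<le> T" "-1 \<le> T'" and reg: "regime_ok P (canon P T) T" "regime_ok P (canon P T') T'"
    and rect: "in_rect_interior (cuts P (canon P T) T) a b U1 U2" "in_rect_interior (cuts P (canon P T') T') a' b' U1' U2'"
    using w w' by (auto simp: wit_def)
  have U: "-1 < U1 \<and> U1 < 1 \<and> -1 < U2 \<and> U2 < 1"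
    using rect_bounds[OF cuts_ordered[OF P reg(1)] rect(1)] .
  have U': "-1 < U1' \<and> U1' < 1 \<and> -1 < U2' \<and> U2' < 1"
    using rect_bounds[OF cuts_ordered[OF P reg(2)] rect(2)] .
  have "i - i' = 0" apply (rule int_zero) using X X' T assms by auto
  then have ii: "i = i'" by simp
  have "j - j' = 0" apply (rule int_zero) using X X' U U' ii by auto
  have "k - k' = 0" apply (rule int_zero) using X X' U U' ii by auto
  have eq: "T = T'" "U1 = U1'" "U2 = U2'" using X X' ii \<open>j - j' = 0\<close> \<open>k - k' = 0\<close> by auto
  have ord: "ordered (cuts P (canon P T) T)" using cuts_ordered[OF P reg(1)] .
  have "a = a'" using col_unique[OF ord, of a U1 a'] rect eq by (auto simp: in_rect_interior_def)
  moreover have "b = b'" using col_unique[OF ord, of b U2 b'] rect eq by (auto simp: in_rect_interior_def)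
  ultimately show ?thesis using eq by simp
qed

lemma label_unique:
  assumes P: "0 < Pof p q" "Pof p q < 1" and "has_label p q c L1" "has_label p q c L2"
  shows "L1 = L2"
proof -
  obtain T U1 U2 r a b where 1: "wit (Pof p q) (Xi (Pof p q) c) T U1 U2 r a b" "L1 = rect_label r a b"
    using assms(3) unfolding has_label_wit by blast
  obtain T' U1' U2' r' a' b' where 2: "wit (Pof p q) (Xi (Pof p q) c) T' U1' U2' r' a' b'" "L2 = rect_label r' a' b'"
    using assms(4) unfolding has_label_wit by blast
  obtain T1 U11 U21 a1 b1 where n1: "wit (Pof p q) (Xi (Pof p q) c) T1 U11 U21 (canon (Pof p q) T1) a1 b1" "T1 < 1"
     "rect_label (canon (Pof p q) T1) a1 b1 = rect_label r a b"
    using normalize[OF P 1(1)] by blast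
  obtain T2 U12 U22 a2 b2 where n2: "wit (Pof p q) (Xi (Pof p q) c) T2 U12 U22 (canon (Pof p q) T2) a2 b2" "T2 < 1"
     "rect_label (canon (Pof p q) T2) a2 b2 = rect_label r' a' b'"
    using normalize[OF P 2(1)] by blast
  show ?thesis
    using canon_unique[OF P n1(1) n2(1) n1(2) n2(2)] n1(3) n2(3) 1(2) 2(2) by simp
qed

lemma swap_wit:
  assumes w: "wit P (Xi P (x,y)) T U1 U2 r a b" and y: "2*y = of_int kk"
  shows "wit P (Xi P (x,-y)) T U2 U1 r b a"
proof -
  obtain i j k where X0: "(T - 2*of_int i, U1 - (of_int i*P + 2*of_int j), U2 - (of_int i*P+2*of_int k)) = Xi P (x,y)"
    using w unfolding wit_def Lambda_iff by blast
  have mem: "(2 * of_int (i+kk), of_int (i+kk)*P + 2*of_int k, of_int (i+kk)*P + 2*of_int j) \<in> Lambda P"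
    unfolding Lambda_iff by blast
  have "(T - 2 * of_int (i+kk), U2 - (of_int (i+kk)*P + 2*of_int k), U1 - (of_int (i+kk)*P + 2*of_int j)) = Xi P (x,-y)"
    using X0 y by (auto simp: Xi_def algebra_simps)
  then have "\<exists>v1 v2 v3. (v1, v2, v3) \<in> Lambda P \<and> (T - v1, U2 - v2, U1 - v3) = Xi P (x,-y)"
    using mem by blast
  then show ?thesis using w by (auto simp: wit_def in_rect_interior_def)
qed

lemma swap_label:
  assumes "has_label p q (x,y) L" "2*y = of_int kk"
  shows "has_label p q (x,-y) (swapNS ` L)"
proof -
  obtain T U1 U2 r a b where 1: "wit (Pof p q) (Xi (Pof p q) (x,y)) T U1 U2 r a b" "L = rect_label r a b"
    using assms(1) unfolding has_label_wit by blast
  have ab: "a \<in> {1..4}" "b \<in> {1..4}" using 1 by (auto simp: wit_def in_rect_interior_def)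
  show ?thesis unfolding has_label_wit
    using swap_wit[OF 1(1) assms(2)] rect_label_swap[of r b a] 1(2) by blast
qed


definition oddw :: "real \<Rightarrow> real \<Rightarrow> bool" where "oddw w c \<longleftrightarrow> (\<exists>b::int. c * w = of_int (2*b+1))"
definition evenw :: "real \<Rightarrow> real \<Rightarrow> bool" where "evenw w z \<longleftrightarrow> (\<exists>b::int. z * w = of_int (2*b))"

lemma evenw_add: "evenw w z \<Longrightarrow> evenw w z' \<Longrightarrow> evenw w (z + z')"
proof -
  assume "evenw w z" "evenw w z'"
  then obtain b b' where "z * w = of_int (2*b)" "z' * w = of_int (2*b')" unfolding evenw_def by blast
  then have "(z + z') * w = of_int (2*(b + b'))" by (simp add: algebra_simps)
  then show ?thesis unfolding evenw_def by blast
qed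
lemma evenw_diff: "evenw w z \<Longrightarrow> evenw w z' \<Longrightarrow> evenw w (z - z')"
proof -
  assume "evenw w z" "evenw w z'"
  then obtain b b' where "z * w = of_int (2*b)" "z' * w = of_int (2*b')" unfolding evenw_def by blast
  then have "(z - z') * w = of_int (2*(b - b'))" by (simp add: algebra_simps)
  then show ?thesis unfolding evenw_def by blast
qed
lemma evenw_mult: "evenw w z \<Longrightarrow> evenw w (of_int k * z)"
proof -
  assume "evenw w z"
  then obtain b where "z * w = of_int (2*b)" unfolding evenw_def by blast
  then have "(of_int k * z) * w = of_int (2*(k*b))" by (simp add: algebra_simps)
  then show ?thesis unfolding evenw_def by blast
qed
lemma oddw_add: "oddw w c \<Longrightarrow> evenw w z \<Longrightarrow> oddw w (z + c)"
proof -
  assume "oddw w c" "evenw w z"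
  then obtain b b' where "c * w = of_int (2*b+1)" "z * w = of_int (2*b')" unfolding evenw_def oddw_def by blast
  then have "(z + c) * w = of_int (2*(b + b')+1)" by (simp add: algebra_simps)
  then show ?thesis unfolding oddw_def by blast
qed
lemma oddw_diff: "oddw w c \<Longrightarrow> evenw w z \<Longrightarrow> oddw w (c - z)"
proof -
  assume "oddw w c" "evenw w z"
  then obtain b b' where "c * w = of_int (2*b+1)" "z * w = of_int (2*b')" unfolding evenw_def oddw_def by blast
  then have "(c - z) * w = of_int (2*(b - b')+1)" by (simp add: algebra_simps)
  then show ?thesis unfolding oddw_def by blast
qed
lemma even_ne_odd: "evenw w z \<Longrightarrow> oddw w c \<Longrightarrow> z \<noteq> c"
proof
  assume "evenw w z" "oddw w c" "z = c"
  then obtain b b' where "c * w = of_int (2*b+1)" "z * w = of_int (2*b')" unfolding evenw_def oddw_def by blast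
  then have "(of_int (2*b+1)::real) = of_int (2*b')" using \<open>z = c\<close> by simp
  then have "2*b+1 = 2*b'" by (simp only: of_int_eq_iff)
  then show False by presburger
qed

lemma exists_label:
  assumes pq: "0 < p" "p < q" "odd (p+q)"
    and xy: "x = of_int m + 1/2" "y = of_int n + 1/2"
  shows "\<exists>L. has_label p q (x,y) L"
proof -
  define P where "P = Pof p q"
  define w where "w = real (p+q)"
  define W where "W = int (p+q)"
  have wW: "w = of_int W" by (simp add: w_def W_def)
  have wpos: "w > 0" using pq by (simp add: w_def)
  have Pw: "P * w = 2 * of_nat p" using wpos by (simp add: P_def Pof_def w_def)
  have P: "0 < P" "P < 1" using pq by (auto simp: P_def Pof_def field_simps)
  have oW: "odd W" using pq(3) unfolding W_def by simp
  obtain c where Wc: "W = 2*c+1" using oW by (rule oddE)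
  have ev2: "evenw w 2" unfolding evenw_def wW by (rule exI[of _ W]) simp
  have evP: "evenw w P" unfolding evenw_def using Pw by (intro exI[of _ "int p"]) simp
  have od1: "oddw w 1" unfolding oddw_def wW Wc by (rule exI[of _ c]) simp
  have odm1: "oddw w (-1)" unfolding oddw_def wW Wc by (rule exI[of _ "-c-1"]) (simp add: algebra_simps)
  have odn: "oddw w (of_int (2*n+1))" unfolding oddw_def wW Wc
    by (rule exI[of _ "2*n*c + n + c"]) (simp add: algebra_simps)
  define X1 where "X1 = P * of_int (2*m+1) + of_int (2*n+1)"
  define X2 where "X2 = P * of_int (2*m+1)"
  define X3 where "X3 = P * of_int (2*m+1) + P * of_int (2*n+1)"
  have XI: "Xi P (x,y) = (X1, X2, X3)" unfolding Xi_def X1_def X2_def X3_def xy by (simp add: algebra_simps)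
  define i where "i = \<lfloor>(X1+1)/2\<rfloor>"
  define T where "T = X1 - 2*of_int i"
  define j where "j = \<lfloor>(X2 - of_int i*P + 1)/2\<rfloor>"
  define U1 where "U1 = X2 - (of_int i*P + 2*of_int j)"
  define k where "k = \<lfloor>(X3 - of_int i*P + 1)/2\<rfloor>"
  define U2 where "U2 = X3 - (of_int i*P + 2*of_int k)"
  have T: "-1 \<le> T" "T < 1" using floor_correct[of "(X1+1)/2"] unfolding T_def i_def by (auto simp: field_simps)
  have U1b: "-1 \<le> U1" "U1 < 1" using floor_correct[of "(X2 - of_int i*P + 1)/2"] unfolding U1_def j_def by (auto simp: field_simps)
  have U2b: "-1 \<le> U2" "U2 < 1" using floor_correct[of "(X3 - of_int i*P + 1)/2"] unfolding U2_def k_def by (auto simp: field_simps)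
  have evPk: "evenw w (of_int z * P)" for z using evenw_mult[OF evP] .
  have ev2k: "evenw w (2 * of_int z)" for z using evenw_mult[OF ev2, of z] by (simp add: mult.commute)
  have evU1: "evenw w U1" unfolding U1_def X2_def
    by (rule evenw_diff[OF _ evenw_add[OF evPk ev2k]]) (use evPk[of "2*m+1"] in \<open>simp add: mult.commute\<close>)
  have evU2: "evenw w U2" unfolding U2_def X3_def
    by (rule evenw_diff[OF _ evenw_add[OF evPk ev2k]])
       (use evPk[of "2*m+1"] evPk[of "2*n+1"] in \<open>simp add: mult.commute evenw_add\<close>)
  have odT: "oddw w T" unfolding T_def X1_def
    by (rule oddw_diff[OF _ ev2k]) (use oddw_add[OF odn evPk[of "2*m+1"]] in \<open>simp add: mult.commute\<close>)
  have o1: "oddw w (1 - P)" by (rule oddw_diff[OF od1 evP])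
  have o2: "oddw w (-1 + P)" using oddw_add[OF odm1 evP] by (simp add: add.commute)
  have o3: "oddw w (2 - P + T)" using oddw_add[OF odT evenw_diff[OF ev2 evP]] by simp
  have ev2m: "evenw w (-2)" using evenw_diff[OF evenw_diff[OF ev2 ev2] ev2] by simp
  have o4: "oddw w (-2 + P + T)" using oddw_add[OF odT evenw_add[OF ev2m evP]] by simp
  define r where "r = canon P T"
  have reg: "regime_ok P r T" unfolding r_def using regime_canon[OF P] T by simp
  have ord: "ordered (cuts P r T)" by (rule cuts_ordered[OF P reg])
  have r123: "r = 1 \<or> r = 2 \<or> r = 3" unfolding r_def canon_def by auto
  have nc: "z \<noteq> cutv (cuts P r T) 1 \<and> z \<noteq> cutv (cuts P r T) 2 \<and> z \<noteq> cutv (cuts P r T) 3" if "evenw w z" for z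
  proof -
    have "z \<noteq> T" "z \<noteq> 1 - P" "z \<noteq> -1 + P" "z \<noteq> 2 - P + T" "z \<noteq> -2 + P + T"
      using even_ne_odd[OF that] odT o1 o2 o3 o4 by blast+
    then show ?thesis using r123 unfolding cuts_def cutv_def by auto
  qed
  have U1m: "U1 \<noteq> -1" using even_ne_odd[OF evU1 odm1] .
  have U2m: "U2 \<noteq> -1" using even_ne_odd[OF evU2 odm1] .
  obtain a where a: "a \<in> {1..4}" "cutv (cuts P r T) (a-1) < U1" "U1 < cutv (cuts P r T) a"
    using col_exists[OF ord, of U1] U1b U1m nc[OF evU1] by auto
  obtain b where b: "b \<in> {1..4}" "cutv (cuts P r T) (b-1) < U2" "U2 < cutv (cuts P r T) b"
    using col_exists[OF ord, of U2] U2b U2m nc[OF evU2] by auto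
  have mem: "(2 * of_int (-i), of_int (-i)*P + 2*of_int (-j), of_int (-i)*P + 2*of_int (-k)) \<in> Lambda P"
    unfolding Lambda_iff by blast
  have eqX: "(T - 2 * of_int (-i), U1 - (of_int (-i)*P + 2*of_int (-j)), U2 - (of_int (-i)*P + 2*of_int (-k))) = Xi P (x,y)"
    unfolding XI T_def U1_def U2_def by (simp add: algebra_simps)
  have lat: "\<exists>v1 v2 v3. (v1,v2,v3) \<in> Lambda P \<and> (T - v1, U1 - v2, U2 - v3) = Xi P (x,y)"
    using mem eqX by blast
  have "wit P (Xi P (x,y)) T U1 U2 r a b" unfolding wit_def
  proof (intro conjI)
    show "\<exists>v1 v2 v3. (v1,v2,v3) \<in> Lambda P \<and> (T - v1, U1 - v2, U2 - v3) = Xi P (x,y)" by (rule lat)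
  qed (use T U1b U2b reg a b in \<open>auto simp: in_rect_interior_def\<close>)
  then show ?thesis unfolding has_label_wit P_def by blast
qed

theorem lemma3p5:
  fixes p q :: nat and m n :: int and x y :: real
  assumes "even_rational_param p q"
    and "(x, y) = tile_center m n"
  shows "tile_label p q (x, - y) = swapNS ` tile_label p q (x, y)"
proof -
  have pq: "0 < p" "0 < q" "p < q" "coprime p q" "even (p*q)" using assms(1) by (auto simp: even_rational_param_def)
  have "odd (p+q)"
  proof
    assume e: "even (p+q)"
    have "even p \<or> even q" using pq(5) by auto
    then have "even p \<and> even q" using e by auto
    then have "is_unit (2::nat)" using coprime_common_divisor[OF pq(4)] by blast
    then show False by simp
  qed
  have xy: "x = of_int m + 1/2" "y = of_int n + 1/2" using assms(2) by (auto simp: tile_center_def)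
  have P: "0 < Pof p q" "Pof p q < 1" using pq by (auto simp: Pof_def field_simps)
  obtain L where L: "has_label p q (x,y) L" using exists_label[OF pq(1) pq(3) \<open>odd (p+q)\<close> xy] by blast
  have y2: "2*y = of_int (2*n+1)" using xy by simp
  have L': "has_label p q (x,-y) (swapNS ` L)" by (rule swap_label[OF L y2])
  have "tile_label p q (x,y) = L" unfolding tile_label_def
    by (rule the_equality, rule L) (use label_unique[OF P L] in auto)
  moreover have "tile_label p q (x,-y) = swapNS ` L" unfolding tile_label_def
    by (rule the_equality, rule L') (use label_unique[OF P L'] in auto)
  ultimately show ?thesis by simp
qed

end
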